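(* There is an absolute constant $c_0>0$ such that the following holds for every $0<\beta<1$. Let $t$ be a $\beta$-balanced full binary tree with $n\ge2$ leaves whose nodes carry at most $\sigma\ge2$ different labels. Then the minimal dag of $t$ has at most $\frac{\alpha_\beta\cdot n}{\log_\sigma n}$ nodes, where $\alpha_\beta = c_0\big(1+\log_{1+\beta}(\beta^{-1})\big)$ depends only on $\beta$.
   Context: A full binary tree is a finite rooted ordered labelled tree in which every node has either $0$ or $2$ children. The leaf size of a node is the number of leaves of the subtree rooted at it. An inner node $v$ with children $v_1,v_2$ of leaf sizes $n_1,n_2$ is $\beta$-balanced if $n_1\ge\beta n_2$ and $n_2\ge\beta n_1$. The tree $t$ is $\beta$-balanced if for all inner nodes $u,v$ such that $v$ is a child of $u$, at least one of $u$, $v$ is $\beta$-balanced. The minimal dag of a tree has one node for each isomorphism class (as labelled ordered trees) of subtrees of the tree; its size is its number of nodes. *)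

theory Defs
  imports Complex_Main
begin

datatype 'a fbtree = Leaf 'a | Node 'a "'a fbtree" "'a fbtree"

fun leaves :: "'a fbtree \<Rightarrow> nat" where
  "leaves (Leaf _) = 1"
| "leaves (Node _ l r) = leaves l + leaves r"

fun is_inner :: "'a fbtree \<Rightarrow> bool" where
  "is_inner (Leaf _) = False"
| "is_inner (Node _ _ _) = True"

fun node_balanced :: "real \<Rightarrow> 'a fbtree \<Rightarrow> bool" where
  "node_balanced \<beta> (Leaf _) = False"
| "node_balanced \<beta> (Node _ l r) =
     (real (leaves l) \<ge> \<beta> * real (leaves r) \<and> real (leaves r) \<ge> \<beta> * real (leaves l))"

fun tree_balanced :: "real \<Rightarrow> 'a fbtree \<Rightarrow> bool" where
  "tree_balanced \<beta> (Leaf _) = True"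
| "tree_balanced \<beta> (Node a l r) =
     (tree_balanced \<beta> l \<and> tree_balanced \<beta> r \<and>
      (\<forall>c \<in> {l, r}. is_inner c \<longrightarrow> node_balanced \<beta> (Node a l r) \<or> node_balanced \<beta> c))"

fun subtrees :: "'a fbtree \<Rightarrow> 'a fbtree set" where
  "subtrees (Leaf a) = {Leaf a}"
| "subtrees (Node a l r) = insert (Node a l r) (subtrees l \<union> subtrees r)"

fun labels :: "'a fbtree \<Rightarrow> 'a set" where
  "labels (Leaf a) = {a}"
| "labels (Node a l r) = insert a (labels l \<union> labels r)"

text \<open>The minimal dag has one node per isomorphism class (= equality class) of subtrees.\<close>
definition dag_size :: "'a fbtree \<Rightarrow> nat" where
  "dag_size t = card (subtrees t)"

end

theory Submission
  imports Defs
begin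

lemma leaves_pos: "leaves t \<ge> 1"
  by (induction t) auto

lemma finite_labels: "finite (labels t)"
  by (induction t) auto

lemma finite_subtrees: "finite (subtrees t)"
  by (induction t) auto

lemma subtrees_prop: "s \<in> subtrees t \<Longrightarrow> labels s \<subseteq> labels t \<and> leaves s \<le> leaves t"
  by (induction t) auto

lemma card_subtrees_le: "card (subtrees t) \<le> 2 * leaves t - 1"
proof (induction t)
  case (Leaf x) then show ?case by simp
next
  case (Node a l r)
  have "card (subtrees (Node a l r)) \<le> 1 + card (subtrees l \<union> subtrees r)"
    by (simp add: card_insert_le_m1 card_insert_if finite_subtrees)
  also have "\<dots> \<le> 1 + card (subtrees l) + card (subtrees r)" using card_Un_le by simp
  finally have "card (subtrees (Node a l r)) \<le> 1 + card (subtrees l) + card (subtrees r)" .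
  moreover have "leaves l \<ge> 1" "leaves r \<ge> 1" using leaves_pos by auto
  ultimately show ?case using Node.IH by simp
qed

fun enc :: "'a fbtree \<Rightarrow> ('a \<times> bool) list" where
  "enc (Leaf a) = [(a, True)]"
| "enc (Node a l r) = (a, False) # enc l @ enc r"

lemma enc_app_inj: "enc s @ xs = enc t @ ys \<Longrightarrow> s = t \<and> xs = ys"
proof (induction s arbitrary: t xs ys)
  case (Leaf a) then show ?case by (cases t) simp_all
next
  case (Node a l r)
  obtain a' l' r' where t: "t = Node a' l' r'" using Node.prems by (cases t) simp_all
  from Node.prems t have "a = a'" and e: "enc l @ (enc r @ xs) = enc l' @ (enc r' @ ys)" by simp_all
  from Node.IH(1)[OF e] have "l = l'" and e2: "enc r @ xs = enc r' @ ys" by auto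
  from Node.IH(2)[OF e2] show ?case using t \<open>a = a'\<close> \<open>l = l'\<close> by auto
qed

lemma enc_inj: "inj enc"
  using enc_app_inj[where xs="[]" and ys="[]"] by (auto intro: injI)

lemma enc_len: "length (enc s) = 2 * leaves s - 1"
proof (induction s)
  case (Node a l r) then show ?case using leaves_pos[of l] leaves_pos[of r] by simp
qed simp

lemma enc_set: "set (enc s) \<subseteq> labels s \<times> UNIV"
  by (induction s) auto

lemma geom_nat: "(b::nat) \<ge> 2 \<Longrightarrow> (\<Sum>i\<le>N. b^i) < b^(Suc N)"
proof (induction N)
  case 0 then show ?case by simp
next
  case (Suc N)
  have "(\<Sum>i\<le>Suc N. b^i) = (\<Sum>i\<le>N. b^i) + b^Suc N" by simp
  also have "\<dots> < b^Suc N + b^Suc N" using Suc by simp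
  also have "\<dots> \<le> b * b^Suc N" using Suc.prems by (simp add: mult_2[symmetric])
  finally show ?case by simp
qed

lemma small_count:
  assumes "card (labels t) \<le> \<sigma>" "\<sigma> \<ge> 2" "k \<ge> 1"
  shows "card {s \<in> subtrees t. leaves s < k} \<le> \<sigma> ^ (4*k)"
proof -
  let ?A = "labels t \<times> (UNIV::bool set)"
  let ?L = "{xs. set xs \<subseteq> ?A \<and> length xs \<le> 2*k - 1}"
  have fA: "finite ?A" by (intro finite_cartesian_product finite_labels) simp
  have cA: "card ?A = 2 * card (labels t)" by (simp add: card_cartesian_product)
  have cA1: "card (labels t) \<ge> 1"
    using finite_labels[of t] by (cases t) (auto simp: Suc_le_eq card_gt_0_iff)
  have "card {s \<in> subtrees t. leaves s < k} \<le> card ?L"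
  proof (rule card_inj_on_le[where f=enc])
    show "inj_on enc {s \<in> subtrees t. leaves s < k}" using enc_inj by (auto simp: inj_on_def inj_def)
    show "enc ` {s \<in> subtrees t. leaves s < k} \<subseteq> ?L"
    proof
      fix x assume "x \<in> enc ` {s \<in> subtrees t. leaves s < k}"
      then obtain s where s: "s \<in> subtrees t" "leaves s < k" "x = enc s" by auto
      have "set x \<subseteq> ?A" using enc_set[of s] subtrees_prop[OF s(1)] s(3) by auto
      moreover have "length x \<le> 2*k - 1" using enc_len[of s] s by simp
      ultimately show "x \<in> ?L" by simp
    qed
    show "finite ?L" using finite_lists_length_le[OF fA] .
  qed
  also have "\<dots> = (\<Sum>i\<le>2*k-1. card ?A ^ i)" using card_lists_length_le[OF fA] .
  also have "\<dots> < card ?A ^ Suc (2*k-1)" using cA cA1 by (intro geom_nat) simp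
  also have "Suc (2*k-1) = 2*k" using assms by simp
  also have "card ?A ^ (2*k) \<le> (\<sigma>^2) ^ (2*k)"
  proof (rule power_mono)
    have "card ?A \<le> 2 * \<sigma>" using cA assms by simp
    also have "\<dots> \<le> \<sigma> * \<sigma>" using assms by simp
    finally show "card ?A \<le> \<sigma>^2" by (simp add: power2_eq_square)
  qed simp
  also have "\<dots> = \<sigma>^(4*k)" by (simp add: power_mult[symmetric])
  finally show ?thesis by simp
qed

fun cnt :: "nat \<Rightarrow> 'a fbtree \<Rightarrow> nat" where
  "cnt k (Leaf a) = (if k \<le> 1 then 1 else 0)"
| "cnt k (Node a l r) = (if k \<le> leaves l + leaves r then 1 else 0) + cnt k l + cnt k r"

lemma cnt_zero: "leaves t < k \<Longrightarrow> cnt k t = 0"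
  by (induction t) auto

lemma big_count: "card {s \<in> subtrees t. k \<le> leaves s} \<le> cnt k t"
proof (induction t)
  case (Leaf x)
  have "{s \<in> subtrees (Leaf x). k \<le> leaves s} = (if k \<le> 1 then {Leaf x} else {})" by auto
  then show ?case by simp
next
  case (Node a l r)
  let ?P = "\<lambda>t. {s \<in> subtrees t. k \<le> leaves s}"
  let ?T = "if k \<le> leaves l + leaves r then {Node a l r} else {}"
  have eq: "?P (Node a l r) = ?T \<union> (?P l \<union> ?P r)" by auto
  have "card (?P (Node a l r)) \<le> card ?T + card (?P l \<union> ?P r)" unfolding eq by (rule card_Un_le)
  also have "card (?P l \<union> ?P r) \<le> card (?P l) + card (?P r)" by (rule card_Un_le)
  finally have "card (?P (Node a l r)) \<le> card ?T + card (?P l) + card (?P r)" by simp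
  moreover have "card ?T = (if k \<le> leaves l + leaves r then 1 else 0)" by simp
  ultimately show ?case using Node.IH by simp
qed

definition Lam :: "real \<Rightarrow> real" where "Lam \<beta> = 1 + log (1+\<beta>) (1/\<beta>)"
definition ell :: "real \<Rightarrow> nat \<Rightarrow> nat \<Rightarrow> real" where
  "ell \<beta> k m = log (1+\<beta>) (min (real m) (real k * (1+\<beta>)/\<beta>) / real k)"
definition gg :: "real \<Rightarrow> nat \<Rightarrow> nat \<Rightarrow> real" where
  "gg \<beta> k m = (3 + 2 * Lam \<beta>) * (2 * real m / real k - 1) + 2 * ell \<beta> k m"

lemma Lam_ge: assumes "0 < \<beta>" "\<beta> < 1" shows "Lam \<beta> \<ge> 1"
proof -
  have "1 < 1/\<beta>" using assms by simp
  hence "0 \<le> log (1+\<beta>) (1/\<beta>)" using assms by (subst zero_le_log_cancel_iff) auto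
  thus ?thesis unfolding Lam_def by simp
qed

lemma K_ge: assumes "0 < \<beta>" "\<beta> < 1" shows "real k \<le> real k * (1+\<beta>)/\<beta>"
proof -
  have "real k * 1 \<le> real k * ((1+\<beta>)/\<beta>)" using assms by (intro mult_left_mono) auto
  thus ?thesis by simp
qed

lemma ell_nonneg: assumes "0 < \<beta>" "\<beta> < 1" "1 \<le> k" "k \<le> m" shows "0 \<le> ell \<beta> k m"
proof -
  have "real k \<le> min (real m) (real k * (1+\<beta>)/\<beta>)" using K_ge[OF assms(1,2)] assms by simp
  hence "1 \<le> min (real m) (real k * (1+\<beta>)/\<beta>) / real k" using assms by simp
  thus ?thesis unfolding ell_def using assms by (subst zero_le_log_cancel_iff) auto
qed

lemma ell_mono: assumes "0 < \<beta>" "\<beta> < 1" "1 \<le> k" "k \<le> m" "m \<le> m'" shows "ell \<beta> k m \<le> ell \<beta> k m'"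
proof -
  have p: "0 < min (real m) (real k * (1+\<beta>)/\<beta>) / real k" using assms by simp
  have "min (real m) (real k * (1+\<beta>)/\<beta>) / real k \<le> min (real m') (real k * (1+\<beta>)/\<beta>) / real k"
    using assms by (intro divide_right_mono) auto
  thus ?thesis unfolding ell_def using assms p by (subst log_le_cancel_iff) auto
qed

lemma ell_le: assumes "0 < \<beta>" "\<beta> < 1" "1 \<le> k" "k \<le> m" shows "ell \<beta> k m \<le> Lam \<beta>"
proof -
  have p: "0 < min (real m) (real k * (1+\<beta>)/\<beta>) / real k" using assms by simp
  have "min (real m) (real k * (1+\<beta>)/\<beta>) / real k \<le> (real k * (1+\<beta>)/\<beta>) / real k"
    using assms by (intro divide_right_mono) auto
  also have "\<dots> = (1+\<beta>) * (1/\<beta>)" using assms by simp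
  finally have "ell \<beta> k m \<le> log (1+\<beta>) ((1+\<beta>) * (1/\<beta>))"
    unfolding ell_def using assms p by (subst log_le_cancel_iff) auto
  also have "\<dots> = Lam \<beta>" unfolding Lam_def using assms by (subst log_mult_pos) auto
  finally show ?thesis .
qed

lemma ell_step: assumes "0 < \<beta>" "\<beta> < 1" "1 \<le> k" "k \<le> m1" "\<beta> * real m1 < real k"
  "(1+\<beta>) * real m1 \<le> real m"
  shows "ell \<beta> k m1 + 1 \<le> ell \<beta> k m"
proof -
  define K where "K = real k * (1+\<beta>)/\<beta>"
  have "(1+\<beta>) * real m1 < (1+\<beta>) * (real k / \<beta>)"
    using assms by (intro mult_strict_left_mono) (auto simp: field_simps)
  hence lt: "(1+\<beta>) * real m1 < K" unfolding K_def by (simp add: mult.commute)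
  have "0 \<le> \<beta> * real m1" using assms by simp
  hence "real m1 \<le> (1+\<beta>) * real m1" by (simp add: algebra_simps)
  hence m1K: "real m1 \<le> K" using lt by linarith
  have m1p: "real m1 > 0" "real k > 0" using assms by auto
  have e1: "ell \<beta> k m1 = log (1+\<beta>) (real m1 / real k)" unfolding ell_def K_def[symmetric]
    using m1K by (simp add: min_absorb1)
  have "log (1+\<beta>) ((1+\<beta>) * (real m1 / real k)) = log (1+\<beta>) (1+\<beta>) + log (1+\<beta>) (real m1 / real k)"
    using assms m1p by (intro log_mult_pos) auto
  also have "log (1+\<beta>) (1+\<beta>) = 1" using assms by simp
  finally have e2: "ell \<beta> k m1 + 1 = log (1+\<beta>) ((1+\<beta>) * (real m1 / real k))" using e1 by simp
  have le: "(1+\<beta>) * real m1 \<le> min (real m) K" using lt assms(6) by simp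
  have "(1+\<beta>) * (real m1 / real k) = ((1+\<beta>) * real m1) / real k" by simp
  also have "\<dots> \<le> min (real m) K / real k" using le m1p by (intro divide_right_mono) auto
  finally have le2: "(1+\<beta>) * (real m1 / real k) \<le> min (real m) K / real k" .
  have pos: "0 < (1+\<beta>) * (real m1 / real k)" using assms m1p by simp
  have "log (1+\<beta>) ((1+\<beta>) * (real m1 / real k)) \<le> log (1+\<beta>) (min (real m) K / real k)"
    using le2 pos assms by (intro log_mono) auto
  also have "\<dots> = ell \<beta> k m" unfolding ell_def K_def ..
  finally show ?thesis using e2 by simp
qed

lemma gg_ge: assumes "0 < \<beta>" "\<beta> < 1" "1 \<le> k" "k \<le> m" shows "3 + 2 * Lam \<beta> \<le> gg \<beta> k m"
proof -
  have "1 \<le> 2 * real m / real k - 1" using assms by (simp add: field_simps)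
  hence "(3 + 2 * Lam \<beta>) * 1 \<le> (3 + 2 * Lam \<beta>) * (2 * real m / real k - 1)"
    using Lam_ge[OF assms(1,2)] by (intro mult_left_mono) auto
  thus ?thesis unfolding gg_def using ell_nonneg[OF assms] by simp
qed

lemma gg_mono: assumes "0 < \<beta>" "\<beta> < 1" "1 \<le> k" "k \<le> m" "m \<le> m'" shows "gg \<beta> k m \<le> gg \<beta> k m'"
proof -
  have "2 * real m / real k - 1 \<le> 2 * real m' / real k - 1" using assms by (simp add: divide_right_mono)
  hence "(3 + 2 * Lam \<beta>) * (2 * real m / real k - 1) \<le> (3 + 2 * Lam \<beta>) * (2 * real m' / real k - 1)"
    using Lam_ge[OF assms(1,2)] by (intro mult_left_mono) auto
  thus ?thesis unfolding gg_def using ell_mono[OF assms] by simp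
qed

lemma gg_bin: assumes "0 < \<beta>" "\<beta> < 1" "1 \<le> k" "k \<le> m1" "k \<le> m2"
  shows "2 + gg \<beta> k m1 + gg \<beta> k m2 \<le> gg \<beta> k (m1 + m2)"
proof -
  have l1: "ell \<beta> k m1 \<le> Lam \<beta>" using ell_le assms by blast
  have l2: "ell \<beta> k m2 \<le> ell \<beta> k (m1+m2)" using ell_mono assms by simp
  have eq: "(3 + 2 * Lam \<beta>) * (2 * real (m1+m2) / real k - 1) =
     (3 + 2 * Lam \<beta>) * (2 * real m1 / real k - 1) + (3 + 2 * Lam \<beta>) * (2 * real m2 / real k - 1)
     + (3 + 2 * Lam \<beta>)" using assms(3) by (simp add: field_simps)
  show ?thesis unfolding gg_def eq using l1 l2 by linarith
qed

lemma gg_step: assumes "0 < \<beta>" "\<beta> < 1" "1 \<le> k" "k \<le> m1" "\<beta> * real m1 < real k"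
  "(1+\<beta>) * real m1 \<le> real m"
  shows "gg \<beta> k m1 + 2 \<le> gg \<beta> k m"
proof -
  have "m1 \<le> m" using assms by (smt (verit) mult_le_cancel_right1 of_nat_le_iff mult.commute)
  hence "2 * real m1 / real k - 1 \<le> 2 * real m / real k - 1" using assms by (simp add: divide_right_mono)
  hence "(3 + 2 * Lam \<beta>) * (2 * real m1 / real k - 1) \<le> (3 + 2 * Lam \<beta>) * (2 * real m / real k - 1)"
    using Lam_ge[OF assms(1,2)] by (intro mult_left_mono) auto
  thus ?thesis unfolding gg_def using ell_step[OF assms] by simp
qed


lemma inner_of_leaves: "leaves t \<ge> 2 \<Longrightarrow> is_inner t"
  by (cases t) auto

lemma main_bound:
  assumes b: "0 < \<beta>" "\<beta> < 1" and k: "1 \<le> k"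
  shows "tree_balanced \<beta> t \<Longrightarrow> k \<le> leaves t \<Longrightarrow>
    real (cnt k t) \<le> gg \<beta> k (leaves t) \<and>
    (node_balanced \<beta> t \<longrightarrow> real (cnt k t) + 1 \<le> gg \<beta> k (leaves t))"
proof (induction t)
  case (Leaf x)
  hence "k = 1" using k by simp
  have "3 + 2 * Lam \<beta> \<le> gg \<beta> k 1" using gg_ge[OF b k] \<open>k = 1\<close> by simp
  thus ?case using \<open>k = 1\<close> Lam_ge[OF b] by simp
next
  case (Node a l r)
  define m1 where "m1 = leaves l"
  define m2 where "m2 = leaves r"
  have lm: "leaves (Node a l r) = m1 + m2" by (simp add: m1_def m2_def)
  have tbl: "tree_balanced \<beta> l" and tbr: "tree_balanced \<beta> r" using Node.prems by auto
  have tbc: "\<And>c. c \<in> {l, r} \<Longrightarrow> is_inner c \<Longrightarrow> node_balanced \<beta> (Node a l r) \<or> node_balanced \<beta> c"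
    using Node.prems(1) by auto
  have nb: "node_balanced \<beta> (Node a l r) = (real m1 \<ge> \<beta> * real m2 \<and> real m2 \<ge> \<beta> * real m1)"
    by (simp add: m1_def m2_def)
  have m1p: "m1 \<ge> 1" and m2p: "m2 \<ge> 1" using leaves_pos m1_def m2_def by auto
  have km: "k \<le> m1 + m2" using Node.prems lm by simp
  have cntN: "cnt k (Node a l r) = 1 + cnt k l + cnt k r" using km by (simp add: m1_def m2_def)
  have G5: "3 + 2 * Lam \<beta> \<le> gg \<beta> k (m1 + m2)" using gg_ge[OF b k km] .
  consider "k \<le> m1" "k \<le> m2" | "m1 < k" "m2 < k" | "k \<le> m1" "m2 < k" | "m1 < k" "k \<le> m2" by linarith
  then show ?case
  proof cases
    case 1
    have "real (cnt k l) \<le> gg \<beta> k m1" using Node.IH(1)[OF tbl] 1 m1_def by simp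
    moreover have "real (cnt k r) \<le> gg \<beta> k m2" using Node.IH(2)[OF tbr] 1 m2_def by simp
    ultimately show ?thesis using gg_bin[OF b k 1] cntN lm by simp
  next
    case 2
    hence "cnt k l = 0" "cnt k r = 0" using cnt_zero m1_def m2_def by auto
    thus ?thesis using cntN lm G5 Lam_ge[OF b] by simp
  next
    case 3
    have cr: "cnt k r = 0" using cnt_zero 3 m2_def by auto
    have IH: "real (cnt k l) \<le> gg \<beta> k m1" "node_balanced \<beta> l \<longrightarrow> real (cnt k l) + 1 \<le> gg \<beta> k m1"
      using Node.IH(1)[OF tbl] 3 m1_def by auto
    show ?thesis
    proof (cases "node_balanced \<beta> (Node a l r)")
      case True
      hence "\<beta> * real m1 < real k" using nb 3 by simp
      moreover have "(1+\<beta>) * real m1 \<le> real (m1 + m2)" using True nb by (simp add: algebra_simps)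
      ultimately have "gg \<beta> k m1 + 2 \<le> gg \<beta> k (m1 + m2)" using gg_step[OF b k 3(1)] by simp
      thus ?thesis using IH cntN cr lm by simp
    next
      case False
      have "m1 \<ge> 2" using 3 m2p by simp
      hence "is_inner l" using inner_of_leaves m1_def by simp
      hence "node_balanced \<beta> (Node a l r) \<or> node_balanced \<beta> l" using tbc[of l] by blast
      hence "node_balanced \<beta> l" using False by blast
      hence "real (cnt k l) + 1 \<le> gg \<beta> k m1" using IH by simp
      moreover have "gg \<beta> k m1 \<le> gg \<beta> k (m1 + m2)" using gg_mono[OF b k 3(1)] by simp
      ultimately show ?thesis using False cntN cr lm by (simp del: node_balanced.simps)
    qed
  next
    case 4
    have cr: "cnt k l = 0" using cnt_zero 4 m1_def by auto
    have IH: "real (cnt k r) \<le> gg \<beta> k m2" "node_balanced \<beta> r \<longrightarrow> real (cnt k r) + 1 \<le> gg \<beta> k m2"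
      using Node.IH(2)[OF tbr] 4 m2_def by auto
    show ?thesis
    proof (cases "node_balanced \<beta> (Node a l r)")
      case True
      hence "\<beta> * real m2 < real k" using nb 4 by simp
      moreover have "(1+\<beta>) * real m2 \<le> real (m2 + m1)" using True nb by (simp add: algebra_simps)
      ultimately have "gg \<beta> k m2 + 2 \<le> gg \<beta> k (m2 + m1)" using gg_step[OF b k 4(2)] by simp
      thus ?thesis using IH cntN cr lm by (simp add: add.commute)
    next
      case False
      have "m2 \<ge> 2" using 4 m1p by simp
      hence "is_inner r" using inner_of_leaves m2_def by simp
      hence "node_balanced \<beta> (Node a l r) \<or> node_balanced \<beta> r" using tbc[of r] by blast
      hence "node_balanced \<beta> r" using False by blast
      hence "real (cnt k r) + 1 \<le> gg \<beta> k m2" using IH by simp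
      moreover have "gg \<beta> k m2 \<le> gg \<beta> k (m2 + m1)" using gg_mono[OF b k 4(2)] by simp
      ultimately show ?thesis using False cntN cr lm by (simp add: add.commute del: node_balanced.simps)
    qed
  qed
qed


lemma gg_upper: assumes "0 < \<beta>" "\<beta> < 1" "1 \<le> k" "k \<le> m"
  shows "gg \<beta> k m \<le> 12 * Lam \<beta> * real m / real k"
proof -
  have L: "Lam \<beta> \<ge> 1" using Lam_ge assms by blast
  have r: "1 \<le> real m / real k" using assms by simp
  have e: "ell \<beta> k m \<le> Lam \<beta>" using ell_le assms by blast
  have "gg \<beta> k m \<le> (3 + 2 * Lam \<beta>) * (2 * (real m / real k)) + 2 * Lam \<beta>"
    unfolding gg_def using e L by (simp add: algebra_simps)
  also have "\<dots> \<le> (5 * Lam \<beta>) * (2 * (real m / real k)) + 2 * Lam \<beta> * (real m / real k)"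
  proof (rule add_mono)
    show "(3 + 2 * Lam \<beta>) * (2 * (real m / real k)) \<le> (5 * Lam \<beta>) * (2 * (real m / real k))"
      using L r by (intro mult_right_mono) auto
    have "2 * Lam \<beta> * 1 \<le> 2 * Lam \<beta> * (real m / real k)"
      using L r by (intro mult_left_mono) auto
    thus "2 * Lam \<beta> \<le> 2 * Lam \<beta> * (real m / real k)" by simp
  qed
  also have "\<dots> = 12 * Lam \<beta> * real m / real k" by (simp add: field_simps)
  finally show ?thesis .
qed

lemma ln2_ge: "ln (2::real) \<ge> 1/2"
proof -
  have "ln (1/2::real) \<le> 1/2 - 1" by (rule ln_le_minus_one) simp
  thus ?thesis by (simp add: ln_div)
qed

lemma lam_sqrt: assumes "n \<ge> 2" "\<sigma> \<ge> 2"
  shows "log (real \<sigma>) (real n) \<le> 4 * sqrt (real n)"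
proof -
  have "ln (sqrt (real n)) \<le> sqrt (real n) - 1" using assms by (intro ln_le_minus_one) simp
  hence ln: "ln (real n) \<le> 2 * sqrt (real n)" using ln_sqrt[of "real n"] by simp
  have "ln (2::real) \<le> ln (real \<sigma>)" using assms by (subst ln_le_cancel_iff) auto
  hence l2: "ln (real \<sigma>) \<ge> 1/2" using ln2_ge by linarith
  have ln0: "ln (real n) \<ge> 0" using assms by simp
  have "log (real \<sigma>) (real n) = ln (real n) / ln (real \<sigma>)" by (simp add: log_def)
  also have "\<dots> \<le> ln (real n) / (1/2)" using l2 ln0 by (intro divide_left_mono) auto
  also have "\<dots> \<le> 4 * sqrt (real n)" using ln by simp
  finally show ?thesis .
qed

theorem mainTheorem6:
  shows "\<exists>c0::real. c0 > 0 \<and>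
    (\<forall>\<beta>::real. 0 < \<beta> \<and> \<beta> < 1 \<longrightarrow>
      (\<forall>(t :: nat fbtree) (n :: nat) (\<sigma> :: nat).
         tree_balanced \<beta> t \<and> leaves t = n \<and> n \<ge> 2 \<and>
         \<sigma> \<ge> 2 \<and> card (labels t) \<le> \<sigma> \<longrightarrow>
         real (dag_size t) \<le>
           c0 * (1 + log (1 + \<beta>) (1 / \<beta>)) * real n / log (real \<sigma>) (real n)))"
proof (intro exI[of _ 200] conjI allI impI)
  fix \<beta> :: real and t :: "nat fbtree" and n \<sigma> :: nat
  assume b: "0 < \<beta> \<and> \<beta> < 1"
    and h: "tree_balanced \<beta> t \<and> leaves t = n \<and> n \<ge> 2 \<and> \<sigma> \<ge> 2 \<and> card (labels t) \<le> \<sigma>"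
  have b1: "0 < \<beta>" "\<beta> < 1" using b by auto
  have tb: "tree_balanced \<beta> t" and ln: "leaves t = n" and n2: "n \<ge> 2" and s2: "\<sigma> \<ge> 2"
    and cl: "card (labels t) \<le> \<sigma>" using h by auto
  define lam where "lam = log (real \<sigma>) (real n)"
  define L where "L = Lam \<beta>"
  have L1: "L \<ge> 1" unfolding L_def using Lam_ge b1 by blast
  have lampos: "lam > 0" unfolding lam_def using n2 s2 by simp
  have goal: "200 * (1 + log (1 + \<beta>) (1 / \<beta>)) * real n / lam = 200 * L * (real n / lam)"
    unfolding L_def Lam_def by simp
  have "real (dag_size t) \<le> 200 * L * (real n / lam)"
  proof (cases "lam < 16")
    case True
    have "card (subtrees t) \<le> 2 * n" using card_subtrees_le[of t] ln by simp
    hence "real (dag_size t) \<le> 2 * real n" unfolding dag_size_def by simp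
    also have "\<dots> \<le> 200 * L * (real n / lam)"
    proof -
      have "2 * real n * lam \<le> 2 * real n * 16" using True lampos by (intro mult_left_mono) auto
      also have "\<dots> = 32 * real n" by simp
      also have "\<dots> \<le> 200 * L * real n" by (intro mult_right_mono) (use L1 in auto)
      finally show ?thesis using lampos by (simp add: pos_le_divide_eq field_simps)
    qed
    finally show ?thesis .
  next
    case False
    define k where "k = nat \<lfloor>lam / 8\<rfloor>"
    have f0: "\<lfloor>lam / 8\<rfloor> \<ge> 0" using False by simp
    have rk: "real k = real_of_int \<lfloor>lam / 8\<rfloor>" unfolding k_def using f0 by simp
    have kle: "real k \<le> lam / 8" unfolding rk by (rule of_int_floor_le)
    have "lam / 8 < real_of_int \<lfloor>lam / 8\<rfloor> + 1" by (rule real_of_int_floor_add_one_gt)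
    hence kge: "real k \<ge> lam / 16" unfolding rk using False by linarith
    have k1: "1 \<le> k" using kge False by simp
    have ls: "lam \<le> 4 * sqrt (real n)" unfolding lam_def using lam_sqrt n2 s2 by blast
    have s1: "1 \<le> sqrt (real n)" using n2 by simp
    have "sqrt (real n) * 1 \<le> sqrt (real n) * sqrt (real n)" by (intro mult_left_mono) (use s1 in auto)
    hence sn: "sqrt (real n) \<le> real n" by simp
    have kn: "k \<le> n" using kle ls sn by simp
    let ?S = "{s \<in> subtrees t. leaves s < k}" and ?B = "{s \<in> subtrees t. k \<le> leaves s}"
    have "subtrees t = ?S \<union> ?B" by auto
    hence "card (subtrees t) \<le> card ?S + card ?B" by (metis card_Un_le)
    hence c: "real (dag_size t) \<le> real (card ?S) + real (card ?B)" unfolding dag_size_def by linarith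
    have "real (card ?S) \<le> real (\<sigma> ^ (4*k))" using small_count[OF cl s2 k1] by linarith
    also have "\<dots> = real \<sigma> powr (real (4*k))" using s2 powr_realpow[of "real \<sigma>" "4*k"] by simp
    also have "\<dots> \<le> real \<sigma> powr (lam / 2)" using s2 kle by (intro powr_mono) auto
    also have "\<dots> = sqrt (real n)"
    proof -
      have "real \<sigma> powr (lam / 2) = (real \<sigma> powr lam) powr (1/2)" by (simp add: powr_powr)
      also have "real \<sigma> powr lam = real n" unfolding lam_def using s2 n2 by simp
      finally show ?thesis by (simp add: powr_half_sqrt)
    qed
    also have "\<dots> \<le> 4 * L * (real n / lam)"
    proof -
      have "lam * sqrt (real n) \<le> 4 * sqrt (real n) * sqrt (real n)"
        using ls by (intro mult_right_mono) auto
      also have "\<dots> = 4 * real n" by simp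
      also have "\<dots> \<le> 4 * L * real n" by (intro mult_right_mono) (use L1 in auto)
      finally show ?thesis using lampos by (simp add: pos_le_divide_eq field_simps)
    qed
    finally have cS: "real (card ?S) \<le> 4 * L * (real n / lam)" .
    have "real (card ?B) \<le> real (cnt k t)" using big_count[where k=k and t=t] by linarith
    also have "\<dots> \<le> gg \<beta> k n" using main_bound[OF b1 k1 tb] kn ln by simp
    also have "\<dots> \<le> 12 * L * real n / real k" unfolding L_def using gg_upper[OF b1 k1 kn] .
    also have "\<dots> \<le> 12 * L * real n / (lam / 16)"
      using kge lampos L1 by (intro divide_left_mono) auto
    also have "\<dots> = 192 * L * (real n / lam)" by simp
    finally have cB: "real (card ?B) \<le> 192 * L * (real n / lam)" .
    have "0 \<le> L * (real n / lam)" using L1 lampos by simp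
    thus ?thesis using c cS cB by linarith
  qed
  also have "\<dots> = 200 * (1 + log (1 + \<beta>) (1 / \<beta>)) * real n / lam" by (rule goal[symmetric])
  finally show "real (dag_size t) \<le> 200 * (1 + log (1 + \<beta>) (1 / \<beta>)) * real n / log (real \<sigma>) (real n)"
    unfolding lam_def .
qed simp

end
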